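(* Consider a ROS~2 application executed on a single processor by the events executor with the two-queue mechanism described in the context, under the standing assumptions of the context, with ties in priority broken in LIFO order of release eligibility. Any element removed from the LIFO child queue is always a highest-priority element of that queue.
   Context: Model: a ROS~2 application is abstracted as a forest of trees of subtasks. Roots are released periodically/sporadically with known integer job priorities; a child subtask is released immediately when its parent completes (and only then), and inherits its parent's priority (fixed job-level priority). Execution is non-preemptive on a single processor; larger priority values mean higher priority. Executor mechanism: a released root subtask is pushed into a priority queue (root_queue); a released child subtask is assigned the value latest_priority and pushed onto a LIFO queue (child_queue); at each scheduling decision the tops of the two queues are compared, the one of greater priority is popped and executed, and latest_priority is set to its priority. *)

theory Defs
  imports Main
begin

text \<open>The application is given by a set of root subtasks and a function
  giving, for each subtask, the list of its children (released when it completes).\<close>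

definition app_forest :: "'s set \<Rightarrow> ('s \<Rightarrow> 's list) \<Rightarrow> bool" where
  "app_forest roots children \<longleftrightarrow>
     (\<forall>p. distinct (children p)) \<and>
     (\<forall>p c. c \<in> set (children p) \<longrightarrow> c \<notin> roots) \<and>
     (\<forall>p q c. c \<in> set (children p) \<longrightarrow> c \<in> set (children q) \<longrightarrow> p = q) \<and>
     wf {(c, p). c \<in> set (children p)}"

text \<open>A queue entry: (subtask, priority, release stamp). The release stamp records the order
  in which entries became eligible (were released); larger = later.\<close>
type_synonym 's entry = "'s \<times> int \<times> nat"

definition prio :: "'s entry \<Rightarrow> int" where "prio e = fst (snd e)"
definition stamp :: "'s entry \<Rightarrow> nat" where "stamp e = snd (snd e)"

record 's exec_state =
  root_queue :: "'s entry list"      \<comment> \<open>priority queue, stored as an unordered list\<close>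
  child_queue :: "'s entry list"     \<comment> \<open>LIFO stack; head = top\<close>
  latest_priority :: int
  running :: "'s option"
  clock :: nat                        \<comment> \<open>next release stamp\<close>

definition beats :: "'s entry \<Rightarrow> 's entry \<Rightarrow> bool" where
  "beats a b \<longleftrightarrow> prio b < prio a \<or> (prio b = prio a \<and> stamp b < stamp a)"

definition is_rq_top :: "'s entry list \<Rightarrow> 's entry \<Rightarrow> bool" where
  "is_rq_top rq e \<longleftrightarrow> e \<in> set rq \<and> (\<forall>x\<in>set rq. x = e \<or> \<not> beats x e)"

datatype 's label =
    ReleaseRoot 's int
  | PopRoot "'s entry"
  | PopChild "'s entry"
  | Complete 's

fun push_all :: "int \<Rightarrow> nat \<Rightarrow> 's list \<Rightarrow> 's entry list \<Rightarrow> 's entry list" where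
  "push_all p n [] q = q"
| "push_all p n (c # cs) q = push_all p (Suc n) cs ((c, p, n) # q)"

inductive step :: "'s set \<Rightarrow> ('s \<Rightarrow> 's list) \<Rightarrow> 's exec_state \<Rightarrow> 's label \<Rightarrow> 's exec_state \<Rightarrow> bool"
  for roots children where
  release_root:
    "r \<in> roots \<Longrightarrow>
     step roots children s (ReleaseRoot r p)
       (s\<lparr>root_queue := (r, p, clock s) # root_queue s, clock := Suc (clock s)\<rparr>)"
| pop_root:
    "running s = None \<Longrightarrow> is_rq_top (root_queue s) e \<Longrightarrow>
     (child_queue s = [] \<or> \<not> beats (hd (child_queue s)) e) \<Longrightarrow>
     step roots children s (PopRoot e)
       (s\<lparr>root_queue := remove1 e (root_queue s), latest_priority := prio e,
          running := Some (fst e)\<rparr>)"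
| pop_child:
    "running s = None \<Longrightarrow> child_queue s = c # rest \<Longrightarrow>
     (root_queue s = [] \<or> (\<exists>e. is_rq_top (root_queue s) e \<and> beats c e)) \<Longrightarrow>
     step roots children s (PopChild c)
       (s\<lparr>child_queue := rest, latest_priority := prio c, running := Some (fst c)\<rparr>)"
| complete:
    "running s = Some t \<Longrightarrow>
     step roots children s (Complete t)
       (s\<lparr>child_queue := push_all (latest_priority s) (clock s) (children t) (child_queue s),
          clock := clock s + length (children t), running := None\<rparr>)"

definition init_state :: "int \<Rightarrow> 's exec_state" where
  "init_state p0 = \<lparr>root_queue = [], child_queue = [], latest_priority = p0,
                    running = None, clock = 0\<rparr>"

inductive reachable :: "'s set \<Rightarrow> ('s \<Rightarrow> 's list) \<Rightarrow> 's exec_state \<Rightarrow> bool"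
  for roots children where
  init: "reachable roots children (init_state p0)"
| step: "reachable roots children s \<Longrightarrow> step roots children s l s' \<Longrightarrow>
         reachable roots children s'"

end

theory Submission
  imports Defs
begin

definition inv5 :: "'s exec_state \<Rightarrow> bool" where
  "inv5 s \<longleftrightarrow> sorted_wrt (\<lambda>a b. prio b \<le> prio a) (child_queue s) \<and>
     (running s \<noteq> None \<longrightarrow> (\<forall>x\<in>set (child_queue s). prio x \<le> latest_priority s))"

lemma push_all_inv:
  "sorted_wrt (\<lambda>a b. prio b \<le> prio a) q \<Longrightarrow> (\<forall>x\<in>set q. prio x \<le> p) \<Longrightarrow>
   sorted_wrt (\<lambda>a b. prio b \<le> prio a) (push_all p n cs q) \<and> (\<forall>x\<in>set (push_all p n cs q). prio x \<le> p)"
  by (induction p n cs q rule: push_all.induct) (auto simp: prio_def)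

lemma inv5_step:
  assumes "inv5 s" "step roots children s l s'" shows "inv5 s'"
  using assms(2,1)
proof cases
  case (pop_root e)
  then show ?thesis using assms(1)
    by (cases "child_queue s") (auto simp: inv5_def beats_def)
next
  case (pop_child c rest)
  then show ?thesis using assms(1) by (auto simp: inv5_def)
next
  case (complete t)
  then show ?thesis using assms(1) push_all_inv
    by (auto simp: inv5_def)
qed (auto simp: inv5_def)

lemma inv5_reach: "reachable roots children s \<Longrightarrow> inv5 s"
  by (induction rule: reachable.induct) (simp add: inv5_def init_state_def, metis inv5_step)

theorem lemma5:
  fixes roots :: "'s set" and children :: "'s \<Rightarrow> 's list"
  assumes "app_forest roots children"
    and "reachable roots children s"
    and "step roots children s (PopChild c) s'"
  shows "c \<in> set (child_queue s) \<and> (\<forall>x\<in>set (child_queue s). prio x \<le> prio c)"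
  using assms(3)
proof cases
  case (pop_child rest)
  then show ?thesis using inv5_reach[OF assms(2)] by (auto simp: inv5_def)
qed

end
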